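(* Let $\mathcal C=\{\mathbf s_1,\dots,\mathbf s_M\}\subseteq\{0,1\}^K$, $M\ge2$, be a binary CW code of length $K$ and weight $\omega$, used with equiprobable codewords over the Poisson channel with fixed CSI $(\bar c_{\mathrm s},\bar c_{\mathrm n})\in(0,\infty)^2$, and let $P_e^{\mathrm{code}}$ be the codeword error rate of the optimal detector. For $i\ne j$ let $d_{ij}$ be the Hamming distance between $\mathbf s_i$ and $\mathbf s_j$. Then $$P_e^{\mathrm{code}}\le\frac1M\sum_{i\ne j}\left(\tfrac12 f_{d_{ij}}(0)+\sum_{x=1}^\infty f_{d_{ij}}(x)\right),$$ where the sum is over ordered pairs $(i,j)$ with $i\neq j$ and, for $d>0$, $f_d(x)=e^{-(\lambda_1+\lambda_2)}\left(\frac{\lambda_2}{\lambda_1}\right)^{x/2}I_x\!\left(2\sqrt{\lambda_1\lambda_2}\right)$ with $\lambda_1=\frac{d(\bar c_{\mathrm s}+\bar c_{\mathrm n})}{2}$, $\lambda_2=\frac{d\,\bar c_{\mathrm n}}{2}$, and $I_x$ the modified Bessel function of the first kind of order $x$.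
   Context: A binary CW code of length $K$ and weight $\omega$ is a codebook $\mathcal C\subseteq\{0,1\}^K$ in which every codeword has exactly $\omega$ ones. Channel: given transmitted codeword $\mathbf s$, the observations $r[1],\dots,r[K]$ are independent with $r[k]$ Poisson of mean $s[k]\bar c_{\mathrm s}+\bar c_{\mathrm n}$. The optimal detector outputs a codeword maximizing the likelihood $\prod_{k}\frac{(\bar c_{\mathrm s}s[k]+\bar c_{\mathrm n})^{r[k]}e^{-\bar c_{\mathrm s}s[k]-\bar c_{\mathrm n}}}{r[k]!}$ over $\mathcal C$, ties broken uniformly at random among maximizers. The transmitted codeword is uniform on $\mathcal C$, and $P_e^{\mathrm{code}}$ is the probability that the detected codeword differs from the transmitted one. *)

theory Defs
  imports "HOL-Analysis.Analysis"
begin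

text \<open>Codebook: codewords indexed by i < M, entries s i k for k < K (True = 1).\<close>

definition cw_code :: "(nat \<Rightarrow> nat \<Rightarrow> bool) \<Rightarrow> nat \<Rightarrow> nat \<Rightarrow> nat \<Rightarrow> bool" where
  "cw_code s M K w \<longleftrightarrow>
     (\<forall>i<M. card {k. k < K \<and> s i k} = w) \<and>
     (\<forall>i<M. \<forall>j<M. i \<noteq> j \<longrightarrow> (\<exists>k<K. s i k \<noteq> s j k))"

definition hamming :: "(nat \<Rightarrow> nat \<Rightarrow> bool) \<Rightarrow> nat \<Rightarrow> nat \<Rightarrow> nat \<Rightarrow> nat" where
  "hamming s K i j = card {k. k < K \<and> s i k \<noteq> s j k}"

definition poisson_pmf_val :: "real \<Rightarrow> nat \<Rightarrow> real" where
  "poisson_pmf_val \<mu> n = \<mu> ^ n * exp (- \<mu>) / fact n"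

definition likelihood :: "real \<Rightarrow> real \<Rightarrow> (nat \<Rightarrow> nat \<Rightarrow> bool) \<Rightarrow> nat \<Rightarrow> nat \<Rightarrow> nat list \<Rightarrow> real" where
  "likelihood cs cn s K i r =
     (\<Prod>k<K. poisson_pmf_val ((if s i k then cs else 0) + cn) (r ! k))"

definition ml_set :: "real \<Rightarrow> real \<Rightarrow> (nat \<Rightarrow> nat \<Rightarrow> bool) \<Rightarrow> nat \<Rightarrow> nat \<Rightarrow> nat list \<Rightarrow> nat set" where
  "ml_set cs cn s M K r =
     {j. j < M \<and> (\<forall>l<M. likelihood cs cn s K l r \<le> likelihood cs cn s K j r)}"

text \<open>Codeword error probability of the ML detector with uniform random tie-breaking,
  equiprobable codewords: given s_i sent and r observed, the detector outputs i with
  probability [i in A(r)] / |A(r)|.\<close>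
definition Pe_code :: "real \<Rightarrow> real \<Rightarrow> (nat \<Rightarrow> nat \<Rightarrow> bool) \<Rightarrow> nat \<Rightarrow> nat \<Rightarrow> real" where
  "Pe_code cs cn s M K =
     (1 / real M) * (\<Sum>i<M. infsum (\<lambda>r. likelihood cs cn s K i r *
         (1 - (if i \<in> ml_set cs cn s M K r then 1 / real (card (ml_set cs cn s M K r)) else 0)))
       {r. length r = K})"

definition besselI :: "nat \<Rightarrow> real \<Rightarrow> real" where
  "besselI n z = (\<Sum>m. (z / 2) ^ (2 * m + n) / (fact m * fact (m + n)))"

definition f_d :: "real \<Rightarrow> real \<Rightarrow> nat \<Rightarrow> nat \<Rightarrow> real" where
  "f_d cs cn d x =
     (let l1 = real d * (cs + cn) / 2; l2 = real d * cn / 2 in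
      exp (- (l1 + l2)) * (l2 / l1) powr (real x / 2) * besselI x (2 * sqrt (l1 * l2)))"

end

theory Submission imports Defs "HOL-Probability.Probability" begin

lemma poisson_add:
  assumes a: "a > 0" and b: "b > 0"
  shows "map_pmf (\<lambda>(x,y). x + y) (pair_pmf (poisson_pmf a) (poisson_pmf b)) = poisson_pmf (a + b)"
proof (rule pmf_eqI)
  fix n :: nat
  have "pmf (map_pmf (\<lambda>(x,y). x + y) (pair_pmf (poisson_pmf a) (poisson_pmf b))) n
      = measure_pmf.prob (pair_pmf (poisson_pmf a) (poisson_pmf b)) ((\<lambda>(x,y). x + y) -` {n})"
    by (rule pmf_map)
  also have "(\<lambda>(x,y). x + y) -` {n} = (\<lambda>k. (k, n - k)) ` {..n}"
    by (auto simp: image_iff)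
  also have "measure_pmf.prob (pair_pmf (poisson_pmf a) (poisson_pmf b)) ((\<lambda>k. (k, n - k)) ` {..n})
     = sum (pmf (pair_pmf (poisson_pmf a) (poisson_pmf b))) ((\<lambda>k. (k, n - k)) ` {..n})"
    by (rule measure_measure_pmf_finite) simp
  also have "\<dots> = (\<Sum>k\<le>n. pmf (poisson_pmf a) k * pmf (poisson_pmf b) (n - k))"
    by (subst sum.reindex) (auto simp: inj_on_def pmf_pair)
  also have "\<dots> = (\<Sum>k\<le>n. of_nat (n choose k) * a ^ k * b ^ (n - k)) / fact n * exp (- (a + b))"
    unfolding sum_divide_distrib sum_distrib_right
  proof (rule sum.cong[OF refl])
    fix k assume k: "k \<in> {..n}"
    have "real (n choose k) = fact n / (fact k * fact (n - k))"
      using k by (simp add: binomial_fact)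
    moreover have e: "exp (-(a+b)) = exp(-a)*exp(-b)" by (simp add: exp_add[symmetric])
    ultimately show "pmf (poisson_pmf a) k * pmf (poisson_pmf b) (n - k) =
        real (n choose k) * a ^ k * b ^ (n - k) / fact n * exp (- (a + b))"
      using a b by (simp add: field_simps)
  qed
  also have "\<dots> = pmf (poisson_pmf (a + b)) n"
    using a b by (simp add: binomial_ring[symmetric])
  finally show "pmf (map_pmf (\<lambda>(x,y). x + y) (pair_pmf (poisson_pmf a) (poisson_pmf b))) n = pmf (poisson_pmf (a + b)) n" .
qed

lemma Pi_poisson_sum:
  assumes "finite A" "A \<noteq> {}" "\<And>k. k \<in> A \<Longrightarrow> \<mu> k > 0"
  shows "map_pmf (\<lambda>f. \<Sum>k\<in>A. f k) (Pi_pmf A (0::nat) (\<lambda>k. poisson_pmf (\<mu> k))) = poisson_pmf (\<Sum>k\<in>A. \<mu> k)"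
  using assms
proof (induction A rule: finite_ne_induct)
  case (singleton x)
  show ?case
    by (simp add: Pi_pmf_singleton pmf.map_comp o_def)
next
  case (insert x F)
  have pos: "(\<Sum>k\<in>F. \<mu> k) > 0"
    using insert by (intro sum_pos) auto
  have "map_pmf (\<lambda>f. \<Sum>k\<in>insert x F. f k) (Pi_pmf (insert x F) 0 (\<lambda>k. poisson_pmf (\<mu> k)))
      = map_pmf (\<lambda>(y, f). y + (\<Sum>k\<in>F. f k)) (pair_pmf (poisson_pmf (\<mu> x)) (Pi_pmf F 0 (\<lambda>k. poisson_pmf (\<mu> k))))"
    using insert.hyps
    by (subst Pi_pmf_insert) (auto simp: pmf.map_comp o_def case_prod_unfold intro!: map_pmf_cong sum.cong)
  also have "\<dots> = map_pmf (\<lambda>(x,y). x + y) (map_pmf (\<lambda>(a, b). (id a, (\<Sum>k\<in>F. b k))) (pair_pmf (poisson_pmf (\<mu> x)) (Pi_pmf F 0 (\<lambda>k. poisson_pmf (\<mu> k)))))"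
    by (simp add: pmf.map_comp o_def case_prod_unfold)
  also have "\<dots> = map_pmf (\<lambda>(x,y). x + y) (pair_pmf (poisson_pmf (\<mu> x)) (poisson_pmf (\<Sum>k\<in>F. \<mu> k)))"
    using insert by (simp only: map_pair pmf.map_id0 id_def) simp
  also have "\<dots> = poisson_pmf (\<mu> x + (\<Sum>k\<in>F. \<mu> k))"
    using insert pos by (intro poisson_add) auto
  finally show ?case using insert.hyps by simp
qed


lemma err_bound:
  fixes v :: "nat \<Rightarrow> real"
  assumes i: "i < M"
  shows "1 - (if i \<in> {j. j < M \<and> (\<forall>l<M. v l \<le> v j)} then 1 / real (card {j. j < M \<and> (\<forall>l<M. v l \<le> v j)}) else 0)
     \<le> (\<Sum>j\<in>{..<M}-{i}. if v j > v i then 1 else if v j = v i then 1/2 else 0)"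
proof -
  define A where "A = {j. j < M \<and> (\<forall>l<M. v l \<le> v j)}"
  have nn: "\<And>j. (0::real) \<le> (if v j > v i then 1 else if v j = v i then 1/2 else 0)" by auto
  have "1 - (if i \<in> A then 1 / real (card A) else 0) \<le> (\<Sum>j\<in>{..<M}-{i}. if v j > v i then 1 else if v j = v i then 1/2 else 0)"
  proof (cases "i \<in> A")
    case False
    then obtain l where l: "l < M" "v l > v i" using i unfolding A_def by (auto simp: not_le)
    then have "l \<in> {..<M}-{i}" by auto
    then have "(if v l > v i then 1 else if v l = v i then 1/2 else 0) \<le> (\<Sum>j\<in>{..<M}-{i}. if v j > v i then (1::real) else if v j = v i then 1/2 else 0)"
      by (intro member_le_sum nn) auto
    with l False show ?thesis by simp
  next
    case True
    have fin: "finite A" unfolding A_def by auto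
    have "(\<Sum>j\<in>{..<M}-{i}. if v j > v i then (1::real) else if v j = v i then 1/2 else 0)
        = (\<Sum>j\<in>{..<M}-{i}. if j \<in> A then 1/2 else 0)"
    proof (rule sum.cong[OF refl])
      fix j assume j: "j \<in> {..<M}-{i}"
      have "v j \<le> v i" using True j unfolding A_def by auto
      moreover have "j \<in> A \<longleftrightarrow> v j = v i" using True j unfolding A_def by (auto intro: order.trans order.antisym)
      ultimately show "(if v j > v i then (1::real) else if v j = v i then 1/2 else 0) = (if j \<in> A then 1/2 else 0)"
        by auto
    qed
    also have "\<dots> = (\<Sum>j\<in>{j\<in>{..<M}-{i}. j \<in> A}. 1/2)"
      by (subst sum.inter_filter) auto
    also have "{j\<in>{..<M}-{i}. j \<in> A} = A - {i}" unfolding A_def by auto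
    also have "(\<Sum>j\<in>A - {i}. (1/2::real)) = (real (card A) - 1) / 2"
      using True fin by (simp add: card_Diff_singleton of_nat_diff card_gt_0_iff[symmetric])
        (metis card_0_eq empty_iff of_nat_diff One_nat_def Suc_leI not_gr0 of_nat_1)
    finally have eq: "(\<Sum>j\<in>{..<M}-{i}. if v j > v i then (1::real) else if v j = v i then 1/2 else 0) = (real (card A) - 1) / 2" .
    have c1: "card A \<ge> 1" using True fin by (metis One_nat_def Suc_leI card_gt_0_iff empty_iff)
    have "1 - 1 / real (card A) \<le> (real (card A) - 1) / 2"
    proof (cases "card A = 1")
      case True then show ?thesis by simp
    next
      case False
      then have "real (card A) \<ge> 2" using c1 by linarith
      then have a: "1 / real (card A) \<le> 1/2" "real (card A) - 1 \<ge> 0" by (auto simp: field_simps)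
      have "1 - 1 / real (card A) = (real (card A) - 1) * (1 / real (card A))"
        using c1 by (simp add: field_simps)
      also have "\<dots> \<le> (real (card A) - 1) * (1/2)" by (rule mult_left_mono[OF a])
      finally show ?thesis by simp
    qed
    with True eq show ?thesis by simp
  qed
  then show ?thesis unfolding A_def .
qed


definition Sidx :: "(nat\<Rightarrow>nat\<Rightarrow>bool) \<Rightarrow> nat \<Rightarrow> nat \<Rightarrow> nat list \<Rightarrow> nat" where
  "Sidx s K i r = (\<Sum>k\<in>{k. k<K \<and> s i k}. r!k)"

lemma lik_factor:
  assumes cs: "cs > 0" and cn: "cn > 0" and w: "card {k. k<K \<and> s i k} = w"
  shows "likelihood cs cn s K i r = ((\<Prod>k<K. cn^(r!k) / fact (r!k)) * exp (-(real K*cn + real w*cs)))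
           * ((cs+cn)/cn)^(Sidx s K i r)"
proof -
  define \<rho> where "\<rho> = (cs+cn)/cn"
  have pt: "poisson_pmf_val ((if s i k then cs else 0)+cn) n
        = (cn^n/fact n) * exp(-cn) * (if s i k then \<rho>^n * exp(-cs) else 1)" for k n
  proof (cases "s i k")
    case True
    have "(cs+cn)^n = cn^n * \<rho>^n" using cn by (simp add: \<rho>_def power_divide)
    moreover have "exp (-(cs+cn)) = exp(-cn) * exp(-cs)" by (simp add: exp_add[symmetric])
    ultimately show ?thesis using True by (simp add: poisson_pmf_val_def)
  qed (simp add: poisson_pmf_val_def)
  have "likelihood cs cn s K i r = (\<Prod>k<K. (cn^(r!k)/fact (r!k)) * exp(-cn) * (if s i k then \<rho>^(r!k) * exp(-cs) else 1))"
    unfolding likelihood_def pt ..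
  also have "\<dots> = (\<Prod>k<K. cn^(r!k)/fact (r!k)) * (\<Prod>k<K. exp(-cn)) * (\<Prod>k<K. if s i k then \<rho>^(r!k) * exp(-cs) else 1)"
    by (simp only: prod.distrib)
  also have "(\<Prod>k<K. exp(-cn)) = exp (- (real K * cn))"
    by (simp add: exp_of_nat_mult[symmetric])
  also have "(\<Prod>k<K. if s i k then \<rho>^(r!k) * exp(-cs) else 1) = (\<Prod>k\<in>{k\<in>{..<K}. s i k}. \<rho>^(r!k) * exp(-cs))"
    by (rule prod.inter_filter[symmetric]) simp
  also have "{k\<in>{..<K}. s i k} = {k. k<K \<and> s i k}" by auto
  also have "(\<Prod>k\<in>{k. k<K \<and> s i k}. \<rho>^(r!k) * exp(-cs)) = \<rho>^(Sidx s K i r) * exp (- (real w * cs))"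
    using w by (simp add: prod.distrib Sidx_def power_sum exp_of_nat_mult[symmetric])
  finally show ?thesis unfolding \<rho>_def[symmetric]
    by (simp add: exp_add[symmetric] algebra_simps)
qed


definition Hn :: "nat \<Rightarrow> nat \<Rightarrow> real" where
  "Hn a b = (if a < b then 1 else if b = a then 1/2 else 0)"

definition fbody :: "real \<Rightarrow> real \<Rightarrow> nat \<Rightarrow> real" where
  "fbody l1 l2 x = exp (- (l1 + l2)) * (l2 / l1) powr (real x / 2) * besselI x (2 * sqrt (l1 * l2))"

lemma prob_shift:
  assumes "l1 > 0" "l2 > 0"
  shows "(\<lambda>m. pmf (poisson_pmf l1) m * pmf (poisson_pmf l2) (m + x)) sums
     measure_pmf.prob (pair_pmf (poisson_pmf l1) (poisson_pmf l2)) {(a,b). b = a + x}"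
proof -
  let ?P = "pair_pmf (poisson_pmf l1) (poisson_pmf l2)"
  have "(\<lambda>m. measure_pmf.prob ?P {(m, m + x)}) sums measure_pmf.prob ?P (\<Union> (range (\<lambda>m. {(m, m + x)})))"
    by (rule measure_pmf.finite_measure_UNION) (auto simp: disjoint_family_on_def)
  moreover have "\<Union> (range (\<lambda>m. {(m, m + x)})) = {(a,b). b = a + x}" by auto
  ultimately show ?thesis by (simp add: measure_pmf_single pmf_pair)
qed

lemma fbody_eq:
  assumes l1: "l1 > 0" and l2: "l2 > 0"
    and S: "(\<lambda>m. pmf (poisson_pmf l1) m * pmf (poisson_pmf l2) (m + x)) sums V"
  shows "fbody l1 l2 x = V"
proof -
  define c where "c = exp (- (l1 + l2)) * (l2 / l1) powr (real x / 2)"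
  define bt where "bt m = (2 * sqrt (l1 * l2) / 2) ^ (2 * m + x) / (fact m * fact (m + x))" for m
  have cpos: "c > 0" using l1 l2 by (simp add: c_def)
  have pw: "(l2 / l1) powr (real x / 2) = sqrt (l2 / l1) ^ x"
  proof -
    have "(l2 / l1) powr (real x / 2) = ((l2 / l1) powr (1/2)) powr real x"
      by (simp add: powr_powr)
    also have "\<dots> = sqrt (l2 / l1) ^ x"
      using l1 l2 by (simp add: powr_half_sqrt powr_realpow)
    finally show ?thesis .
  qed
  have key: "sqrt (l2 / l1) ^ x * sqrt (l1 * l2) ^ x = l2 ^ x"
  proof -
    have "sqrt (l2 / l1) * sqrt (l1 * l2) = l2"
    proof -
      have "sqrt (l2 / l1) * sqrt (l1 * l2) = sqrt (l2 / l1 * (l1 * l2))" by (simp only: real_sqrt_mult)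
      also have "l2 / l1 * (l1 * l2) = l2\<^sup>2" using l1 by (simp add: power2_eq_square)
      finally show ?thesis using l2 by simp
    qed
    then show ?thesis by (simp add: power_mult_distrib[symmetric])
  qed
  have tm: "pmf (poisson_pmf l1) m * pmf (poisson_pmf l2) (m + x) = c * bt m" for m
  proof -
    have sq2: "sqrt (l1 * l2) ^ 2 = l1 * l2" using l1 l2 by simp
    have sq: "sqrt (l1 * l2) ^ (2 * m + x) = (l1 * l2) ^ m * sqrt (l1 * l2) ^ x"
      by (simp only: power_add power_mult sq2)
    have e: "exp (- (l1 + l2)) = exp (- l1) * exp (- l2)" by (simp add: exp_add[symmetric])
    have "c * bt m = exp (- (l1 + l2)) * (sqrt (l2 / l1) ^ x * sqrt (l1 * l2) ^ x) * (l1 * l2) ^ m / (fact m * fact (m + x))"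
    proof -
      have h2: "2 * sqrt (l1 * l2) / 2 = sqrt (l1 * l2)" by simp
      show ?thesis unfolding c_def bt_def pw h2 sq by (simp add: field_simps)
    qed
    also have "\<dots> = exp (- (l1 + l2)) * l2 ^ x * (l1 * l2) ^ m / (fact m * fact (m + x))"
      unfolding key ..
    also have "\<dots> = pmf (poisson_pmf l1) m * pmf (poisson_pmf l2) (m + x)"
      using l1 l2 unfolding e by (simp add: power_add power_mult_distrib field_simps)
    finally show ?thesis by simp
  qed
  have "(\<lambda>m. (c * bt m) / c) sums (V / c)"
    using S unfolding tm by (rule sums_divide)
  then have "bt sums (V / c)" using cpos by simp
  then have "besselI x (2 * sqrt (l1 * l2)) = V / c"
    unfolding besselI_def bt_def[symmetric] by (simp add: sums_iff)
  then show ?thesis using cpos unfolding fbody_def c_def[symmetric] by simp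
qed

lemma expect_H:
  assumes l1: "l1 > 0" and l2: "l2 > 0"
  shows "measure_pmf.expectation (pair_pmf (poisson_pmf l1) (poisson_pmf l2)) (\<lambda>(a,b). Hn a b)
     = 1/2 * fbody l1 l2 0 + (\<Sum>x. fbody l1 l2 (Suc x))"
proof -
  let ?P = "pair_pmf (poisson_pmf l1) (poisson_pmf l2)"
  define D where "D = {(a::nat,b::nat). b = a + 0}"
  define G where "G = {(a::nat,b::nat). a < b}"
  have H: "(\<lambda>(a,b). Hn a b) = (\<lambda>p. 1/2 * indicator D p + indicator G p)"
    by (auto simp: fun_eq_iff Hn_def D_def G_def indicator_def)
  have iD: "integrable (measure_pmf ?P) (indicator D :: _ \<Rightarrow> real)"
    by (rule integrable_real_indicator) (auto simp: measure_pmf.emeasure_eq_measure)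
  have iG: "integrable (measure_pmf ?P) (indicator G :: _ \<Rightarrow> real)"
    by (rule integrable_real_indicator) (auto simp: measure_pmf.emeasure_eq_measure)
  have E: "measure_pmf.expectation ?P (\<lambda>(a,b). Hn a b) = 1/2 * measure_pmf.prob ?P D + measure_pmf.prob ?P G"
    unfolding H using iD iG by (simp add: integral_indicator)
  have pD: "measure_pmf.prob ?P D = fbody l1 l2 0"
    unfolding D_def by (rule fbody_eq[OF l1 l2 prob_shift[OF l1 l2], symmetric])
  have "(\<lambda>x. measure_pmf.prob ?P {(a,b). b = a + Suc x}) sums measure_pmf.prob ?P (\<Union> (range (\<lambda>x. {(a,b). b = a + Suc x})))"
    by (rule measure_pmf.finite_measure_UNION) (auto simp: disjoint_family_on_def)
  moreover have "\<Union> (range (\<lambda>x. {(a::nat,b). b = a + Suc x})) = G"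
    unfolding G_def by (auto dest: less_imp_Suc_add)
  moreover have "measure_pmf.prob ?P {(a,b). b = a + Suc x} = fbody l1 l2 (Suc x)" for x
    by (rule fbody_eq[OF l1 l2 prob_shift[OF l1 l2], symmetric])
  ultimately have "(\<lambda>x. fbody l1 l2 (Suc x)) sums measure_pmf.prob ?P G" by simp
  then have pG: "measure_pmf.prob ?P G = (\<Sum>x. fbody l1 l2 (Suc x))" by (simp add: sums_iff)
  show ?thesis using E pD pG by simp
qed


lemma Pi_poisson_pair:
  assumes S: "finite S" and AS: "A \<subseteq> S" and BS: "B \<subseteq> S" and AB: "A \<inter> B = {}"
    and Ane: "A \<noteq> {}" and Bne: "B \<noteq> {}" and pos: "\<And>k. k \<in> S \<Longrightarrow> \<mu> k > 0"
  shows "map_pmf (\<lambda>f. (\<Sum>k\<in>A. f k, \<Sum>k\<in>B. f k)) (Pi_pmf S (0::nat) (\<lambda>k. poisson_pmf (\<mu> k)))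
       = pair_pmf (poisson_pmf (\<Sum>k\<in>A. \<mu> k)) (poisson_pmf (\<Sum>k\<in>B. \<mu> k))"
proof -
  let ?p = "\<lambda>k. poisson_pmf (\<mu> k)"
  have fA: "finite A" "finite B" using S AS BS finite_subset by auto
  have "map_pmf (\<lambda>f. (\<Sum>k\<in>A. f k, \<Sum>k\<in>B. f k)) (Pi_pmf S 0 ?p)
      = map_pmf (\<lambda>f. (\<Sum>k\<in>A. f k, \<Sum>k\<in>B. f k)) (map_pmf (\<lambda>f x. if x \<in> A \<union> B then f x else 0) (Pi_pmf S 0 ?p))"
    by (simp add: pmf.map_comp o_def)
  also have "map_pmf (\<lambda>f x. if x \<in> A \<union> B then f x else 0) (Pi_pmf S 0 ?p) = Pi_pmf (A \<union> B) 0 ?p"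
    using S AS BS by (intro Pi_pmf_subset[symmetric]) auto
  also have "\<dots> = map_pmf (\<lambda>(f,g) x. if x \<in> A then f x else g x) (pair_pmf (Pi_pmf A 0 ?p) (Pi_pmf B 0 ?p))"
    using fA AB by (rule Pi_pmf_union)
  also have "map_pmf (\<lambda>f. (\<Sum>k\<in>A. f k, \<Sum>k\<in>B. f k)) \<dots>
      = map_pmf (\<lambda>(f,g). ((\<Sum>k\<in>A. f k), (\<Sum>k\<in>B. g k))) (pair_pmf (Pi_pmf A 0 ?p) (Pi_pmf B 0 ?p))"
    unfolding pmf.map_comp o_def using AB
    by (intro map_pmf_cong refl) (auto simp: case_prod_unfold intro!: sum.cong)
  also have "\<dots> = pair_pmf (map_pmf (\<lambda>f. \<Sum>k\<in>A. f k) (Pi_pmf A 0 ?p)) (map_pmf (\<lambda>f. \<Sum>k\<in>B. f k) (Pi_pmf B 0 ?p))"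
    by (rule map_pair)
  also have "\<dots> = pair_pmf (poisson_pmf (\<Sum>k\<in>A. \<mu> k)) (poisson_pmf (\<Sum>k\<in>B. \<mu> k))"
    using fA Ane Bne AS BS pos by (subst (1 2) Pi_poisson_sum) auto
  finally show ?thesis .
qed

definition mu :: "real \<Rightarrow> real \<Rightarrow> (nat\<Rightarrow>nat\<Rightarrow>bool) \<Rightarrow> nat \<Rightarrow> nat \<Rightarrow> real" where
  "mu cs cn s i k = (if s i k then cs else 0) + cn"

definition Qp :: "real \<Rightarrow> real \<Rightarrow> (nat\<Rightarrow>nat\<Rightarrow>bool) \<Rightarrow> nat \<Rightarrow> nat \<Rightarrow> (nat \<Rightarrow> nat) pmf" where
  "Qp cs cn s K i = Pi_pmf {..<K} 0 (\<lambda>k. poisson_pmf (mu cs cn s i k))"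

definition Lp :: "real \<Rightarrow> real \<Rightarrow> (nat\<Rightarrow>nat\<Rightarrow>bool) \<Rightarrow> nat \<Rightarrow> nat \<Rightarrow> nat list pmf" where
  "Lp cs cn s K i = map_pmf (\<lambda>f. map f [0..<K]) (Qp cs cn s K i)"

lemma set_Lp: "r \<in> set_pmf (Lp cs cn s K i) \<Longrightarrow> length r = K"
  unfolding Lp_def by auto

lemma lik_pos:
  assumes "cs > 0" "cn > 0"
  shows "likelihood cs cn s K i r > 0"
  unfolding likelihood_def poisson_pmf_val_def using assms
  by (intro prod_pos) (auto intro!: divide_pos_pos mult_pos_pos zero_less_power add_nonneg_pos)

lemma pmf_Lp:
  assumes cs: "cs > 0" and cn: "cn > 0"
  shows "pmf (Lp cs cn s K i) r = (if length r = K then likelihood cs cn s K i r else 0)"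
proof (cases "length r = K")
  case True
  define f0 where "f0 k = (if k < K then r ! k else 0)" for k
  have mpos: "mu cs cn s i k > 0" for k using cs cn by (simp add: mu_def)
  have r: "r = map f0 [0..<K]"
    using True by (intro nth_equalityI) (auto simp: f0_def)
  have pQ: "pmf (Qp cs cn s K i) f0 = likelihood cs cn s K i r"
    unfolding Qp_def likelihood_def
    using cs cn add_pos_pos[OF cs cn]
    by (subst pmf_Pi') (auto simp: f0_def mpos poisson_pmf_val_def mu_def intro!: prod.cong)
  have f0in: "f0 \<in> set_pmf (Qp cs cn s K i)"
    using lik_pos[OF cs cn, of s K i r] pQ by (simp add: set_pmf_iff)
  have inj: "inj_on (\<lambda>f. map f [0..<K]) (set_pmf (Qp cs cn s K i))"
  proof (rule inj_onI)
    fix f g assume f: "f \<in> set_pmf (Qp cs cn s K i)" and g: "g \<in> set_pmf (Qp cs cn s K i)"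
      and eq: "map f [0..<K] = map g [0..<K]"
    have "\<forall>x. x \<notin> {..<K} \<longrightarrow> f x = 0" "\<forall>x. x \<notin> {..<K} \<longrightarrow> g x = 0"
      using f g set_Pi_pmf_subset[of "{..<K}" 0 "\<lambda>k. poisson_pmf (mu cs cn s i k)"]
      unfolding Qp_def by auto
    moreover have "f x = g x" if "x < K" for x
      using arg_cong[OF eq, of "\<lambda>l. l ! x"] that by simp
    ultimately show "f = g" by (metis ext lessThan_iff)
  qed
  have "pmf (Lp cs cn s K i) r = pmf (Qp cs cn s K i) f0"
    unfolding Lp_def r by (rule pmf_map_inj[OF inj f0in])
  with pQ True show ?thesis by simp
next
  case False
  have "r \<notin> (\<lambda>f. map f [0..<K]) ` set_pmf (Qp cs cn s K i)" using False by auto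
  then show ?thesis unfolding Lp_def using False by (simp add: pmf_map_outside)
qed

lemma infsum_Lp:
  assumes cs: "cs > 0" and cn: "cn > 0" and g: "\<And>r. \<bar>g r\<bar> \<le> B"
  shows "infsum (\<lambda>r. likelihood cs cn s K i r * g r) {r. length r = K}
       = measure_pmf.expectation (Lp cs cn s K i) g"
proof -
  let ?L = "Lp cs cn s K i"
  have abs: "Infinite_Set_Sum.abs_summable_on (\<lambda>r. pmf ?L r * g r) UNIV"
  proof (rule Infinite_Set_Sum.abs_summable_on_comparison_test')
    show "Infinite_Set_Sum.abs_summable_on (\<lambda>r. pmf ?L r * B) UNIV"
      by (intro Infinite_Set_Sum.abs_summable_on_cmult_left) auto
    show "norm (pmf ?L r * g r) \<le> pmf ?L r * B" for r
      using g[of r] by (simp add: abs_mult mult_left_mono)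
  qed
  have "measure_pmf.expectation ?L g = infsetsum (\<lambda>r. pmf ?L r * g r) UNIV"
    by (rule pmf_expectation_eq_infsetsum)
  also have "\<dots> = infsum (\<lambda>r. pmf ?L r * g r) UNIV"
    by (rule infsetsum_infsum[OF abs])
  also have "\<dots> = infsum (\<lambda>r. likelihood cs cn s K i r * g r) {r. length r = K}"
    by (rule infsum_cong_neutral) (auto simp: pmf_Lp[OF cs cn])
  finally show ?thesis by simp
qed

lemma joint_Lp:
  assumes cs: "cs > 0" and cn: "cn > 0"
    and Ane: "{k. k < K \<and> s i k \<and> \<not> s j k} \<noteq> {}" and Bne: "{k. k < K \<and> s j k \<and> \<not> s i k} \<noteq> {}"
  shows "map_pmf (\<lambda>r. (\<Sum>k\<in>{k. k < K \<and> s i k \<and> \<not> s j k}. r ! k, \<Sum>k\<in>{k. k < K \<and> s j k \<and> \<not> s i k}. r ! k)) (Lp cs cn s K i)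
     = pair_pmf (poisson_pmf (real (card {k. k < K \<and> s i k \<and> \<not> s j k}) * (cs + cn)))
                (poisson_pmf (real (card {k. k < K \<and> s j k \<and> \<not> s i k}) * cn))"
proof -
  define A where "A = {k. k < K \<and> s i k \<and> \<not> s j k}"
  define B where "B = {k. k < K \<and> s j k \<and> \<not> s i k}"
  have "map_pmf (\<lambda>r. (\<Sum>k\<in>A. r ! k, \<Sum>k\<in>B. r ! k)) (Lp cs cn s K i)
      = map_pmf (\<lambda>f. (\<Sum>k\<in>A. f k, \<Sum>k\<in>B. f k)) (Pi_pmf {..<K} 0 (\<lambda>k. poisson_pmf (mu cs cn s i k)))"
    unfolding Lp_def Qp_def pmf.map_comp o_def
    by (intro map_pmf_cong refl) (auto simp: A_def B_def intro!: sum.cong)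
  also have "\<dots> = pair_pmf (poisson_pmf (\<Sum>k\<in>A. mu cs cn s i k)) (poisson_pmf (\<Sum>k\<in>B. mu cs cn s i k))"
    using Ane Bne cs cn by (intro Pi_poisson_pair) (auto simp: A_def B_def mu_def)
  also have "(\<Sum>k\<in>A. mu cs cn s i k) = real (card A) * (cs + cn)"
    by (simp add: A_def mu_def)
  also have "(\<Sum>k\<in>B. mu cs cn s i k) = real (card B) * cn"
    by (simp add: B_def mu_def)
  finally show ?thesis unfolding A_def B_def .
qed


lemma Hn_shift: "Hn (a + c) (b + c) = Hn a b"
  by (simp add: Hn_def)

lemma pair_bound:
  assumes cs: "cs > 0" and cn: "cn > 0" and cw: "cw_code s M K w"
    and i: "i < M" and j: "j < M" and ij: "i \<noteq> j"
  shows "measure_pmf.expectation (Lp cs cn s K i) (\<lambda>r. Hn (Sidx s K i r) (Sidx s K j r))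
     = 1/2 * f_d cs cn (hamming s K i j) 0 + (\<Sum>x. f_d cs cn (hamming s K i j) (Suc x))"
proof -
  define A where "A = {k. k < K \<and> s i k \<and> \<not> s j k}"
  define B where "B = {k. k < K \<and> s j k \<and> \<not> s i k}"
  define C where "C = {k. k < K \<and> s i k \<and> s j k}"
  have fin: "finite A" "finite B" "finite C" by (auto simp: A_def B_def C_def)
  have Si: "{k. k < K \<and> s i k} = A \<union> C" "A \<inter> C = {}" by (auto simp: A_def C_def)
  have Sj: "{k. k < K \<and> s j k} = B \<union> C" "B \<inter> C = {}" by (auto simp: B_def C_def)
  have wi: "card A + card C = w" using cw i Si fin unfolding cw_code_def by (metis card_Un_disjoint)
  have wj: "card B + card C = w" using cw j Sj fin unfolding cw_code_def by (metis card_Un_disjoint)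
  have cAB: "card A = card B" using wi wj by simp
  have ham: "hamming s K i j = card A + card B"
  proof -
    have "{k. k < K \<and> s i k \<noteq> s j k} = A \<union> B" by (auto simp: A_def B_def)
    moreover have "A \<inter> B = {}" by (auto simp: A_def B_def)
    ultimately show ?thesis unfolding hamming_def using fin by (simp add: card_Un_disjoint)
  qed
  obtain k where "k < K" "s i k \<noteq> s j k" using cw i j ij unfolding cw_code_def by blast
  then have "A \<union> B \<noteq> {}" by (auto simp: A_def B_def)
  then have ne: "A \<noteq> {}" "B \<noteq> {}" using cAB fin by auto
  have hfun: "(\<lambda>r. Hn (Sidx s K i r) (Sidx s K j r)) = (\<lambda>(a,b). Hn a b) \<circ> (\<lambda>r. (\<Sum>k\<in>A. r ! k, \<Sum>k\<in>B. r ! k))"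
  proof
    fix r
    have "Sidx s K i r = (\<Sum>k\<in>A. r ! k) + (\<Sum>k\<in>C. r ! k)"
      unfolding Sidx_def Si(1) using fin Si(2) by (simp add: sum.union_disjoint)
    moreover have "Sidx s K j r = (\<Sum>k\<in>B. r ! k) + (\<Sum>k\<in>C. r ! k)"
      unfolding Sidx_def Sj(1) using fin Sj(2) by (simp add: sum.union_disjoint)
    ultimately show "Hn (Sidx s K i r) (Sidx s K j r) = ((\<lambda>(a,b). Hn a b) \<circ> (\<lambda>r. (\<Sum>k\<in>A. r ! k, \<Sum>k\<in>B. r ! k))) r"
      by (simp add: Hn_shift)
  qed
  define l1 where "l1 = real (card A) * (cs + cn)"
  define l2 where "l2 = real (card B) * cn"
  have l1: "l1 > 0" and l2: "l2 > 0" using ne fin cs cn by (auto simp: l1_def l2_def card_gt_0_iff)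
  have "measure_pmf.expectation (Lp cs cn s K i) (\<lambda>r. Hn (Sidx s K i r) (Sidx s K j r))
     = measure_pmf.expectation (map_pmf (\<lambda>r. (\<Sum>k\<in>A. r ! k, \<Sum>k\<in>B. r ! k)) (Lp cs cn s K i)) (\<lambda>(a,b). Hn a b)"
    unfolding hfun integral_map_pmf by (simp add: o_def)
  also have "map_pmf (\<lambda>r. (\<Sum>k\<in>A. r ! k, \<Sum>k\<in>B. r ! k)) (Lp cs cn s K i) = pair_pmf (poisson_pmf l1) (poisson_pmf l2)"
    unfolding A_def B_def l1_def l2_def using ne unfolding A_def B_def by (rule joint_Lp[OF cs cn])
  also have "measure_pmf.expectation (pair_pmf (poisson_pmf l1) (poisson_pmf l2)) (\<lambda>(a,b). Hn a b)
      = 1/2 * fbody l1 l2 0 + (\<Sum>x. fbody l1 l2 (Suc x))"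
    by (rule expect_H[OF l1 l2])
  also have "fbody l1 l2 = f_d cs cn (hamming s K i j)"
  proof -
    have e1: "real (hamming s K i j) * (cs + cn) / 2 = l1" unfolding ham l1_def cAB by (simp add: field_simps)
    have e2: "real (hamming s K i j) * cn / 2 = l2" unfolding ham l2_def cAB by (simp add: field_simps)
    show ?thesis unfolding fbody_def f_d_def Let_def e1 e2 ..
  qed
  finally show ?thesis .
qed


lemma cmp_lik:
  assumes cs: "cs > 0" and cn: "cn > 0" and cw: "cw_code s M K w" and i: "i < M" and j: "j < M"
  shows "(if likelihood cs cn s K i r < likelihood cs cn s K j r then 1
          else if likelihood cs cn s K j r = likelihood cs cn s K i r then 1/2 else (0::real))
       = Hn (Sidx s K i r) (Sidx s K j r)"
proof -
  define D where "D = (\<Prod>k<K. cn^(r!k) / fact (r!k)) * exp (-(real K*cn + real w*cs))"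
  define \<rho> where "\<rho> = (cs+cn)/cn"
  have rho: "\<rho> > 1" using cs cn by (simp add: \<rho>_def)
  have li: "likelihood cs cn s K i r = D * \<rho> ^ Sidx s K i r"
    unfolding D_def \<rho>_def using cw i cs cn by (intro lik_factor) (auto simp: cw_code_def)
  have lj: "likelihood cs cn s K j r = D * \<rho> ^ Sidx s K j r"
    unfolding D_def \<rho>_def using cw j cs cn by (intro lik_factor) (auto simp: cw_code_def)
  have "D > 0"
    using lik_pos[OF cs cn, of s K i r] li rho by (simp add: zero_less_mult_iff)
  then have c1: "D * \<rho> ^ a < D * \<rho> ^ b \<longleftrightarrow> a < b" and c2: "D * \<rho> ^ b = D * \<rho> ^ a \<longleftrightarrow> b = a" for a b
    using rho by (simp_all add: mult_less_cancel_left_pos power_strict_increasing_iff power_inject_exp)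
  show ?thesis unfolding li lj Hn_def c1 c2 ..
qed

theorem corollary2:
  fixes s :: "nat \<Rightarrow> nat \<Rightarrow> bool" and M K w :: nat and cs cn :: real
  assumes "M \<ge> 2"
    and "cw_code s M K w"
    and "cs > 0" and "cn > 0"
  shows "Pe_code cs cn s M K \<le>
    (1 / real M) * (\<Sum>i<M. \<Sum>j\<in>{..<M} - {i}.
       (1/2) * f_d cs cn (hamming s K i j) 0 + (\<Sum>x. f_d cs cn (hamming s K i j) (Suc x)))"
proof -
  note cw = assms(2) and cs = assms(3) and cn = assms(4)
  define err where "err i r = 1 - (if i \<in> ml_set cs cn s M K r then 1 / real (card (ml_set cs cn s M K r)) else 0)" for i r
  define hs where "hs i r = (\<Sum>j\<in>{..<M}-{i}. Hn (Sidx s K i r) (Sidx s K j r))" for i r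
  have Hb: "0 \<le> Hn a b" "Hn a b \<le> 1" for a b by (auto simp: Hn_def)
  have T: "infsum (\<lambda>r. likelihood cs cn s K i r * err i r) {r. length r = K}
      \<le> (\<Sum>j\<in>{..<M} - {i}. (1/2) * f_d cs cn (hamming s K i j) 0 + (\<Sum>x. f_d cs cn (hamming s K i j) (Suc x)))"
    if i: "i < M" for i
  proof -
    have eb: "\<bar>err i r\<bar> \<le> 1" for r
    proof (cases "i \<in> ml_set cs cn s M K r")
      case True
      have "finite (ml_set cs cn s M K r)" unfolding ml_set_def by auto
      with True have "card (ml_set cs cn s M K r) \<ge> 1"
        by (metis One_nat_def Suc_leI card_gt_0_iff empty_iff)
      then have "0 \<le> 1 / real (card (ml_set cs cn s M K r))" "1 / real (card (ml_set cs cn s M K r)) \<le> 1"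
        by auto
      then show ?thesis using True by (simp add: err_def)
    qed (simp add: err_def)
    have hb: "\<bar>hs i r\<bar> \<le> real M" for r
    proof -
      have "0 \<le> hs i r" unfolding hs_def using Hb by (intro sum_nonneg) auto
      moreover have "hs i r \<le> (\<Sum>j\<in>{..<M}-{i}. 1)" unfolding hs_def using Hb by (intro sum_mono) auto
      moreover have "(\<Sum>j\<in>{..<M}-{i}. (1::real)) \<le> real M" using card_Diff1_le[of "{..<M}" i] by simp
      ultimately show ?thesis by simp
    qed
    let ?L = "Lp cs cn s K i"
    have int_err: "integrable (measure_pmf ?L) (err i)"
      by (rule measure_pmf.integrable_const_bound[where B=1]) (auto intro: eb)
    have int_hs: "integrable (measure_pmf ?L) (hs i)"
      by (rule measure_pmf.integrable_const_bound[where B="real M"]) (auto intro: hb)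
    have int_h: "integrable (measure_pmf ?L) (\<lambda>r. Hn (Sidx s K i r) (Sidx s K j r))" for j
      by (rule measure_pmf.integrable_const_bound[where B=1]) (use Hb in auto)
    have "infsum (\<lambda>r. likelihood cs cn s K i r * err i r) {r. length r = K} = measure_pmf.expectation ?L (err i)"
      by (rule infsum_Lp[OF cs cn eb])
    also have "\<dots> \<le> measure_pmf.expectation ?L (hs i)"
    proof (rule integral_mono_AE[OF int_err int_hs], rule AE_pmfI)
      fix r assume "r \<in> set_pmf ?L"
      have "err i r \<le> (\<Sum>j\<in>{..<M}-{i}. if likelihood cs cn s K i r < likelihood cs cn s K j r then 1
          else if likelihood cs cn s K j r = likelihood cs cn s K i r then 1/2 else 0)"
        unfolding err_def ml_set_def by (rule err_bound[OF i])
      also have "\<dots> = hs i r" unfolding hs_def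
        by (intro sum.cong refl cmp_lik[OF cs cn cw i]) auto
      finally show "err i r \<le> hs i r" .
    qed
    also have "\<dots> = (\<Sum>j\<in>{..<M}-{i}. measure_pmf.expectation ?L (\<lambda>r. Hn (Sidx s K i r) (Sidx s K j r)))"
      unfolding hs_def by (rule Bochner_Integration.integral_sum[where f="\<lambda>j r. Hn (Sidx s K i r) (Sidx s K j r)"]) (rule int_h)
    also have "\<dots> = (\<Sum>j\<in>{..<M} - {i}. (1/2) * f_d cs cn (hamming s K i j) 0 + (\<Sum>x. f_d cs cn (hamming s K i j) (Suc x)))"
      by (intro sum.cong refl pair_bound[OF cs cn cw i]) auto
    finally show ?thesis .
  qed
  have "Pe_code cs cn s M K = (1 / real M) * (\<Sum>i<M. infsum (\<lambda>r. likelihood cs cn s K i r * err i r) {r. length r = K})"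
    unfolding Pe_code_def err_def ..
  also have "\<dots> \<le> (1 / real M) * (\<Sum>i<M. \<Sum>j\<in>{..<M} - {i}.
       (1/2) * f_d cs cn (hamming s K i j) 0 + (\<Sum>x. f_d cs cn (hamming s K i j) (Suc x)))"
    by (intro mult_left_mono sum_mono T) auto
  finally show ?thesis .
qed

end
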